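(* Let $B$ be a finite simplicial complex and $a$ a simplicial $1$-cochain on $B$ with values $\pm1$ such that $\mathcal{F}(da)$ is a cocycle. Then the consistent collection of framed small necklaces over the $2$-skeleton of $B$ determined by $a$ (the small symmetric triangulated circle bundle over the $2$-skeleton) extends uniquely to a consistent collection of framed small necklaces over the $3$-skeleton of $B$.
   Context: A necklace over a simplex $\sigma$ is a cyclic word whose beads are colored by the vertices of $\sigma$; for a face $\tau\subset\sigma$ the necklace of $\tau$ is obtained by deleting beads whose colors are not in $\tau$, and a collection of necklaces over the simplices of a complex is consistent if it satisfies this for all face inclusions (with compatible inclusion morphisms). A small necklace has exactly two beads of each color and is invariant under rotation by half its length; framed means one bead of each color is bold, and consistency requires bold beads to map to bold beads. The collection determined by $a$: on an edge $[i,j]$ the framed necklace $ijij$ has the bead after the bold $i$ equal to the bold $j$ iff $a([i,j])=+1$; on each triangle it is the unique framed small necklace restricting to these edge necklaces. $d$ is the simplicial coboundary and $\mathcal{F}(3)=\mathcal{F}(-1)=1/4$, $\mathcal{F}(-3)=\mathcal{F}(1)=-1/4$ applied valuewise. *)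

theory Defs
  imports Complex_Main
begin

definition simplicial_complex :: "'v set set \<Rightarrow> bool" where
  "simplicial_complex B \<longleftrightarrow>
     (\<forall>\<sigma>\<in>B. finite \<sigma> \<and> \<sigma> \<noteq> {}) \<and>
     (\<forall>\<sigma>\<in>B. \<forall>\<tau>. \<tau> \<noteq> {} \<longrightarrow> \<tau> \<subseteq> \<sigma> \<longrightarrow> \<tau> \<in> B)"

definition skeleton :: "'v set set \<Rightarrow> nat \<Rightarrow> 'v set set" where
  "skeleton B k = {\<sigma>\<in>B. card \<sigma> \<le> k + 1}"

text \<open>Simplicial coboundary of a cochain c (defined on simplices, given as vertex sets,
  oriented by the vertex order): for sigma = [v0 < ... < v_(k+1)],
  (d c)(sigma) = sum over m of (-1)^m c(sigma without v_m).\<close>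
definition cobdry :: "('v::linorder set \<Rightarrow> 'a::ab_group_add) \<Rightarrow> 'v set \<Rightarrow> 'a" where
  "cobdry c \<sigma> = (\<Sum>v\<in>\<sigma>. if even (card {u\<in>\<sigma>. u < v}) then c (\<sigma> - {v}) else - c (\<sigma> - {v}))"

definition F :: "int \<Rightarrow> real" where
  "F x = (if x = 3 \<or> x = -1 then 1/4 else if x = -3 \<or> x = 1 then -1/4 else 0)"

text \<open>A framed necklace is represented by a list of beads (colour, bold?) read cyclically;
  two lists represent the same necklace iff they differ by a rotation.\<close>

type_synonym 'v fnecklace = "('v \<times> bool) list"

definition neck_eq :: "'v fnecklace \<Rightarrow> 'v fnecklace \<Rightarrow> bool" where
  "neck_eq xs ys \<longleftrightarrow> (\<exists>k. rotate k xs = ys)"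

definition restrict_neck :: "'v set \<Rightarrow> 'v fnecklace \<Rightarrow> 'v fnecklace" where
  "restrict_neck \<tau> xs = filter (\<lambda>b. fst b \<in> \<tau>) xs"

definition framed_small :: "'v set \<Rightarrow> 'v fnecklace \<Rightarrow> bool" where
  "framed_small \<sigma> xs \<longleftrightarrow>
     fst ` set xs \<subseteq> \<sigma> \<and>
     (\<forall>c\<in>\<sigma>. length (filter (\<lambda>b. fst b = c) xs) = 2) \<and>
     (\<forall>c\<in>\<sigma>. length (filter (\<lambda>b. b = (c, True)) xs) = 1) \<and>
     map fst (rotate (length xs div 2) xs) = map fst xs"

definition consistent_fs :: "'v set set \<Rightarrow> nat \<Rightarrow> ('v set \<Rightarrow> 'v fnecklace) \<Rightarrow> bool" where
  "consistent_fs B k N \<longleftrightarrow>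
     (\<forall>\<sigma>\<in>skeleton B k. framed_small \<sigma> (N \<sigma>)) \<and>
     (\<forall>\<sigma>\<in>skeleton B k. \<forall>\<tau>. \<tau> \<noteq> {} \<longrightarrow> \<tau> \<subseteq> \<sigma> \<longrightarrow> neck_eq (restrict_neck \<tau> (N \<sigma>)) (N \<tau>))"

definition edge_sign :: "'v fnecklace \<Rightarrow> 'v \<Rightarrow> 'v \<Rightarrow> int" where
  "edge_sign xs i j =
     (if \<exists>p<length xs. xs ! p = (i, True) \<and> xs ! (Suc p mod length xs) = (j, True)
      then 1 else -1)"

definition determined_by :: "'v::linorder set set \<Rightarrow> ('v set \<Rightarrow> int) \<Rightarrow> ('v set \<Rightarrow> 'v fnecklace) \<Rightarrow> bool" where
  "determined_by B a N \<longleftrightarrow>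
     consistent_fs B 2 N \<and>
     (\<forall>i j. {i, j} \<in> B \<longrightarrow> i < j \<longrightarrow> edge_sign (N {i, j}) i j = a {i, j})"

definition extends_to_3 :: "'v set set \<Rightarrow> ('v set \<Rightarrow> 'v fnecklace) \<Rightarrow> ('v set \<Rightarrow> 'v fnecklace) \<Rightarrow> bool" where
  "extends_to_3 B N2 N3 \<longleftrightarrow>
     consistent_fs B 3 N3 \<and> (\<forall>\<sigma>\<in>skeleton B 2. neck_eq (N3 \<sigma>) (N2 \<sigma>))"

end

theory Submission
  imports Defs
begin

definition mk :: "'a list \<Rightarrow> bool list \<Rightarrow> ('a \<times> bool) list" where
  "mk cs bs = zip cs bs @ zip cs (map Not bs)"
definition perms :: "nat \<Rightarrow> nat list list" where
  "perms n = filter (\<lambda>ds. distinct ds \<and> hd ds = 0) (List.n_lists n [0..<n])"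
definition bitl :: "nat \<Rightarrow> bool list list" where
  "bitl n = filter hd (List.n_lists n [True,False])"
definition forms :: "nat \<Rightarrow> (nat \<times> bool) list list" where
  "forms n = concat (map (\<lambda>ds. map (mk ds) (bitl n)) (perms n))"
definition edges :: "nat \<Rightarrow> (nat\<times>nat) list" where
  "edges n = concat (map (\<lambda>i. map (\<lambda>j. (i,j)) [Suc i..<n]) [0..<n])"
definition esg :: "('a\<times>bool) list \<Rightarrow> 'a \<Rightarrow> 'a \<Rightarrow> int" where
  "esg xs i j = (let ys = filter (\<lambda>b. fst b = i \<or> fst b = j) xs in
     if (\<exists>p\<in>set [0..<length ys]. ys!p = (i,True) \<and> ys!(Suc p mod length ys) = (j,True)) then 1 else -1)"
definition signs :: "nat \<Rightarrow> (nat\<times>bool) list \<Rightarrow> int list" where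
  "signs n G = map (\<lambda>(i,j). esg G i j) (edges n)"
definition cond4 :: "int list \<Rightarrow> bool" where
  "cond4 s = (F (s!5 - s!4 + s!3) - F (s!5 - s!2 + s!1) + F (s!4 - s!2 + s!0) - F (s!3 - s!1 + s!0) = 0)"



lemma neck_refl: "neck_eq xs xs"
  unfolding neck_eq_def by (rule exI[of _ 0]) simp

lemma neck_trans: "neck_eq xs ys \<Longrightarrow> neck_eq ys zs \<Longrightarrow> neck_eq xs zs"
  unfolding neck_eq_def by (metis rotate_rotate)

lemma rotate_inv: "\<exists>m. rotate m (rotate k xs) = xs"
proof (cases "xs = []")
  case True then show ?thesis by simp
next
  case False
  let ?L = "length xs"
  have "rotate (?L - k mod ?L) (rotate k xs) = rotate (?L - k mod ?L + k) xs"
    by (simp add: rotate_rotate)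
  also have "\<dots> = rotate ((?L - k mod ?L + k) mod ?L) xs" by (metis rotate_conv_mod)
  also have "(?L - k mod ?L + k) mod ?L = 0"
  proof -
    have "k mod ?L < ?L" using False by simp
    then have "(?L - k mod ?L + k) mod ?L = (?L - k mod ?L + k mod ?L) mod ?L" by (metis mod_add_right_eq)
    also have "?L - k mod ?L + k mod ?L = ?L" using \<open>k mod ?L < ?L\<close> by simp
    finally have "(?L - k mod ?L + k) mod ?L = 0" by simp
    then show ?thesis by simp
  qed
  finally show ?thesis by auto
qed

lemma neck_sym: "neck_eq xs ys \<Longrightarrow> neck_eq ys xs"
  unfolding neck_eq_def using rotate_inv by blast

lemma filter_rotate: "\<exists>m. filter P (rotate k xs) = rotate m (filter P xs)"
proof -
  let ?m = "k mod length xs"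
  have "rotate k xs = drop ?m xs @ take ?m xs" by (rule rotate_drop_take)
  moreover have "filter P xs = filter P (take ?m xs) @ filter P (drop ?m xs)"
    by (metis append_take_drop_id filter_append)
  ultimately show ?thesis
    by (metis filter_append rotate_append)
qed

lemma neck_restrict: "neck_eq xs ys \<Longrightarrow> neck_eq (restrict_neck \<tau> xs) (restrict_neck \<tau> ys)"
  unfolding neck_eq_def restrict_neck_def using filter_rotate by metis

lemma rot_witness:
  assumes "p < length xs" "P (xs ! p) (xs ! (Suc p mod length xs))"
  shows "\<exists>q<length (rotate k xs). P (rotate k xs ! q) (rotate k xs ! (Suc q mod length (rotate k xs)))"
proof -
  let ?L = "length xs"
  have L: "?L > 0" using assms by auto
  define q where "q = (p + ?L - k mod ?L) mod ?L"
  have qL: "q < ?L" using L q_def by simp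
  have kL: "k mod ?L < ?L" using L by simp
  have e1: "(q + k) mod ?L = p"
  proof -
    have "(q + k) mod ?L = (p + ?L - k mod ?L + k) mod ?L" unfolding q_def by (simp add: mod_add_left_eq)
    also have "\<dots> = (p + ?L - k mod ?L + k mod ?L) mod ?L" by (simp add: mod_add_right_eq)
    also have "p + ?L - k mod ?L + k mod ?L = p + ?L" using kL by simp
    finally show ?thesis using assms(1) by simp
  qed
  have e2: "(Suc q mod ?L + k) mod ?L = Suc p mod ?L"
  proof -
    have "(Suc q mod ?L + k) mod ?L = (Suc q + k) mod ?L" by (simp add: mod_add_left_eq)
    also have "\<dots> = Suc ((q + k) mod ?L) mod ?L" by (simp add: mod_Suc_eq)
    finally show ?thesis using e1 by simp
  qed
  have "rotate k xs ! q = xs ! p" using qL e1 by (simp add: nth_rotate add.commute)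
  moreover have "rotate k xs ! (Suc q mod ?L) = xs ! (Suc p mod ?L)"
    using e2 L by (simp add: nth_rotate add.commute)
  ultimately show ?thesis using assms qL by (intro exI[of _ q]) simp
qed

lemma rot_ex_iff:
  "(\<exists>q<length (rotate k xs). P (rotate k xs ! q) (rotate k xs ! (Suc q mod length (rotate k xs))))
   \<longleftrightarrow> (\<exists>p<length xs. P (xs ! p) (xs ! (Suc p mod length xs)))"
proof
  assume "\<exists>p<length xs. P (xs ! p) (xs ! (Suc p mod length xs))"
  then show "\<exists>q<length (rotate k xs). P (rotate k xs ! q) (rotate k xs ! (Suc q mod length (rotate k xs)))"
    using rot_witness by blast
next
  assume a: "\<exists>q<length (rotate k xs). P (rotate k xs ! q) (rotate k xs ! (Suc q mod length (rotate k xs)))"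
  obtain m where m: "rotate m (rotate k xs) = xs" using rotate_inv by blast
  from rot_witness[where k=m and xs="rotate k xs"] a m
  show "\<exists>p<length xs. P (xs ! p) (xs ! (Suc p mod length xs))" by auto
qed

lemma edge_sign_rotate: "edge_sign (rotate k xs) i j = edge_sign xs i j"
  unfolding edge_sign_def using rot_ex_iff[of k xs "\<lambda>x y. x = (i,True) \<and> y = (j,True)"] by simp

lemma edge_sign_neck: "neck_eq xs ys \<Longrightarrow> edge_sign xs i j = edge_sign ys i j"
  unfolding neck_eq_def using edge_sign_rotate by metis

lemma framed_small_rotate: "framed_small \<sigma> xs \<Longrightarrow> framed_small \<sigma> (rotate k xs)"
proof -
  assume f: "framed_small \<sigma> xs"
  have cnt: "length (filter P (rotate k xs)) = length (filter P xs)" for P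
    by (metis filter_rotate length_rotate)
  have "map fst (rotate (length xs div 2) (rotate k xs)) = rotate k (map fst (rotate (length xs div 2) xs))"
    by (simp add: rotate_map rotate_rotate add.commute)
  also have "\<dots> = map fst (rotate k xs)" using f unfolding framed_small_def by (simp add: rotate_map)
  finally show ?thesis using f cnt unfolding framed_small_def by simp
qed

lemma framed_small_neck: "framed_small \<sigma> xs \<Longrightarrow> neck_eq xs ys \<Longrightarrow> framed_small \<sigma> ys"
  unfolding neck_eq_def using framed_small_rotate by blast



lemma length_filter_sum:
  "finite \<sigma> \<Longrightarrow> fst ` set xs \<subseteq> \<sigma> \<Longrightarrow> length xs = (\<Sum>c\<in>\<sigma>. length (filter (\<lambda>b. fst b = c) xs))"
proof (induction xs)
  case Nil then show ?case by simp
next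
  case (Cons x xs)
  have "(\<Sum>c\<in>\<sigma>. length (filter (\<lambda>b. fst b = c) (x # xs))) =
        (\<Sum>c\<in>\<sigma>. (if fst x = c then 1 else 0) + length (filter (\<lambda>b. fst b = c) xs))"
    by (rule sum.cong) auto
  also have "\<dots> = 1 + (\<Sum>c\<in>\<sigma>. length (filter (\<lambda>b. fst b = c) xs))"
    using Cons.prems by (simp add: sum.distrib)
  finally show ?case using Cons by simp
qed

lemma nth_mk:
  assumes "length bs = length cs" "i < 2 * length cs"
  shows "mk cs bs ! i = (if i < length cs then (cs!i, bs!i) else (cs!(i - length cs), \<not> bs!(i - length cs)))"
  using assms by (auto simp: mk_def nth_append)

lemma length_mk: "length bs = length cs \<Longrightarrow> length (mk cs bs) = 2 * length cs"
  by (simp add: mk_def)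

lemma structure_lemma:
  assumes fs: "framed_small \<sigma> xs" and fin: "finite \<sigma>" and v0: "v0 \<in> \<sigma>"
  shows "\<exists>k cs bs. rotate k xs = mk cs bs \<and> distinct cs \<and> set cs = \<sigma> \<and> length bs = length cs
            \<and> cs \<noteq> [] \<and> hd cs = v0 \<and> hd bs"
proof -
  define n where "n = card \<sigma>"
  have n0: "n > 0" using fin v0 n_def card_gt_0_iff by blast
  have lenx: "length xs = 2 * n"
    using length_filter_sum[OF fin, of xs] fs unfolding framed_small_def n_def by simp
  have "length (filter (\<lambda>b. b = (v0, True)) xs) = 1" using fs v0 unfolding framed_small_def by blast
  then have "filter (\<lambda>b. b = (v0, True)) xs \<noteq> []" by auto
  then have "(v0, True) \<in> set xs" by (auto simp: filter_empty_conv)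
  then obtain p0 where p0: "p0 < length xs" "xs ! p0 = (v0, True)" by (metis in_set_conv_nth)
  define ys where "ys = rotate p0 xs"
  have fy: "framed_small \<sigma> ys" unfolding ys_def using fs framed_small_rotate by blast
  have leny: "length ys = 2 * n" unfolding ys_def using lenx by simp
  have y0: "ys ! 0 = (v0, True)" unfolding ys_def using p0 nth_rotate[of 0 xs p0] by force
  have sub: "fst ` set ys \<subseteq> \<sigma>" using fy unfolding framed_small_def by blast
  have half: "map fst (rotate n ys) = map fst ys" using fy leny unfolding framed_small_def by simp
  have colp: "fst (ys ! (n + p)) = fst (ys ! p)" if "p < n" for p
  proof -
    have "map fst (rotate n ys) ! p = map fst ys ! p" using half by simp
    also have "\<dots> = fst (ys ! p)" using that leny by simp
    finally have "map fst (rotate n ys) ! p = fst (ys ! p)" .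
    moreover have "map fst (rotate n ys) ! p = fst (rotate n ys ! p)" using that leny by simp
    moreover have "rotate n ys ! p = ys ! (n + p)" using that leny by (simp add: nth_rotate add.commute)
    ultimately show ?thesis by simp
  qed
  have colcnt: "card {i. i < 2 * n \<and> fst (ys ! i) = c} = 2" if "c \<in> \<sigma>" for c
  proof -
    have "length (filter (\<lambda>b. fst b = c) ys) = 2" using fy that unfolding framed_small_def by blast
    then show ?thesis by (simp add: length_filter_conv_card leny)
  qed
  have boldcnt: "card {i. i < 2 * n \<and> ys ! i = (c, True)} = 1" if "c \<in> \<sigma>" for c
  proof -
    have "length (filter (\<lambda>b. b = (c, True)) ys) = 1" using fy that unfolding framed_small_def by blast
    then show ?thesis by (simp add: length_filter_conv_card leny)
  qed
  have inS: "fst (ys ! i) \<in> \<sigma>" if "i < 2 * n" for i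
  proof -
    have "ys ! i \<in> set ys" using that leny by simp
    then show ?thesis using sub by auto
  qed
  have distp: "fst (ys ! p) \<noteq> fst (ys ! q)" if "p < n" "q < n" "p \<noteq> q" for p q
  proof
    assume e: "fst (ys ! p) = fst (ys ! q)"
    let ?c = "fst (ys ! p)"
    have c: "?c \<in> \<sigma>" using inS that by simp
    have sb: "{p, q, n + p, n + q} \<subseteq> {i. i < 2 * n \<and> fst (ys ! i) = ?c}"
      using that e colp by auto
    have c4: "card {p, q, n + p, n + q} = 4" using that by auto
    have fS: "finite {i. i < 2 * n \<and> fst (ys ! i) = ?c}" by simp
    have "4 \<le> card {i. i < 2 * n \<and> fst (ys ! i) = ?c}"
      using card_mono[OF fS sb] c4 by simp
    then show False using colcnt[OF c] by simp
  qed
  have boldp: "snd (ys ! (n + p)) = (\<not> snd (ys ! p))" if "p < n" for p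
  proof -
    let ?c = "fst (ys ! p)"
    have c: "?c \<in> \<sigma>" using inS that by simp
    let ?S = "{i. i < 2 * n \<and> fst (ys ! i) = ?c}"
    let ?T = "{i. i < 2 * n \<and> ys ! i = (?c, True)}"
    have finS: "finite ?S" "finite ?T" by auto
    have sb: "{p, n + p} \<subseteq> ?S" using that colp by auto
    have c2: "card {p, n + p} = 2" using that by auto
    have S: "?S = {p, n + p}" using card_subset_eq[OF finS(1) sb] colcnt[OF c] c2 by simp
    have TS: "?T \<subseteq> ?S" by auto
    show ?thesis
    proof (rule ccontr)
      assume "snd (ys ! (n + p)) \<noteq> (\<not> snd (ys ! p))"
      then have eq: "snd (ys ! (n + p)) = snd (ys ! p)" by blast
      show False
      proof (cases "snd (ys ! p)")
        case True
        then have "ys ! p = (?c, True)" "ys ! (n + p) = (?c, True)"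
          using eq colp[OF that] True by (simp_all add: prod_eq_iff)
        then have "{p, n + p} \<subseteq> ?T" using that by auto
        then have "card {p, n + p} \<le> card ?T" by (rule card_mono[OF finS(2)])
        then have "2 \<le> card ?T" using c2 by simp
        then show False using boldcnt[OF c] by simp
      next
        case False
        have Te: "?T = {}"
        proof -
          have "ys ! p \<noteq> (?c, True)" using False by (auto simp: prod_eq_iff)
          moreover have "ys ! (n + p) \<noteq> (?c, True)" using False eq by (auto simp: prod_eq_iff)
          ultimately have np: "p \<notin> ?T" "n + p \<notin> ?T" by simp_all
          show ?thesis
          proof (rule equals0I)
            fix i assume iT: "i \<in> ?T"
            have "i \<in> ?S" using iT TS by blast
            then have "i = p \<or> i = n + p" using S by simp
            then show False using iT np by blast
          qed
        qed
        show False using boldcnt[OF c] Te by (metis card.empty zero_neq_one)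
      qed
    qed
  qed
  define cs where "cs = map fst (take n ys)"
  define bs where "bs = map snd (take n ys)"
  have lcs: "length cs = n" "length bs = n" unfolding cs_def bs_def using leny by auto
  have csn: "cs ! p = fst (ys ! p)" "bs ! p = snd (ys ! p)" if "p < n" for p
    unfolding cs_def bs_def using that leny by auto
  have mkeq: "ys = mk cs bs"
  proof (rule nth_equalityI)
    show "length ys = length (mk cs bs)" using leny lcs length_mk by metis
  next
    fix i assume "i < length ys"
    then have i: "i < 2 * n" using leny by simp
    show "ys ! i = mk cs bs ! i"
    proof (cases "i < n")
      case True
      then show ?thesis using nth_mk[of bs cs i] lcs i csn by (simp add: prod_eq_iff)
    next
      case False
      then have ip: "i - n < n" "n + (i - n) = i" using i by auto
      have "mk cs bs ! i = (cs!(i-n), \<not> bs!(i-n))" using nth_mk[of bs cs i] lcs i False by simp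
      also have "\<dots> = (fst (ys!(n+(i-n))), snd (ys!(n+(i-n))))"
        using csn[OF ip(1)] colp[OF ip(1)] boldp[OF ip(1)] by simp
      also have "\<dots> = ys ! i" using ip(2) by simp
      finally show ?thesis by simp
    qed
  qed
  have dcs: "distinct cs" unfolding distinct_conv_nth using lcs csn distp by auto
  have scs: "set cs \<subseteq> \<sigma>" using lcs csn inS by (auto simp: in_set_conv_nth)
  have "card (set cs) = n" using dcs lcs distinct_card by metis
  then have scs2: "set cs = \<sigma>" using scs fin n_def card_subset_eq by metis
  have "cs \<noteq> []" using lcs n0 by auto
  moreover have "hd cs = v0" using csn(1)[OF n0] y0 `cs \<noteq> []` by (simp add: hd_conv_nth)
  moreover have "hd bs" proof - have "bs \<noteq> []" using lcs n0 by auto then show ?thesis using csn(2)[OF n0] y0 by (simp add: hd_conv_nth) qed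
  ultimately show ?thesis using mkeq dcs scs2 lcs unfolding ys_def by (intro exI[of _ p0] exI[of _ cs] exI[of _ bs]) simp
qed



lemma C1: "n \<in> {1,2,3,4} \<Longrightarrow> \<forall>G\<in>set (forms n). \<forall>Tl\<in>set (subseqs [0..<n]). Tl \<noteq> [] \<longrightarrow> framed_small (set Tl) (restrict_neck (set Tl) G)"
proof -
  have 1: "\<forall>G\<in>set (forms 1). \<forall>Tl\<in>set (subseqs [0..<1]). Tl \<noteq> [] \<longrightarrow> framed_small (set Tl) (restrict_neck (set Tl) G)" by code_simp
  have 2: "\<forall>G\<in>set (forms 2). \<forall>Tl\<in>set (subseqs [0..<2]). Tl \<noteq> [] \<longrightarrow> framed_small (set Tl) (restrict_neck (set Tl) G)" by code_simp
  have 3: "\<forall>G\<in>set (forms 3). \<forall>Tl\<in>set (subseqs [0..<3]). Tl \<noteq> [] \<longrightarrow> framed_small (set Tl) (restrict_neck (set Tl) G)" by code_simp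
  have 4: "\<forall>G\<in>set (forms 4). \<forall>Tl\<in>set (subseqs [0..<4]). Tl \<noteq> [] \<longrightarrow> framed_small (set Tl) (restrict_neck (set Tl) G)" by code_simp
  assume "n \<in> {1,2,3,4}" then show ?thesis using 1 2 3 4 by auto
qed

lemma C2: "n \<in> {1,2,3,4} \<Longrightarrow> distinct (map (signs n) (forms n))"
proof -
  have 1: "distinct (map (signs 1) (forms 1))" by code_simp
  have 2: "distinct (map (signs 2) (forms 2))" by code_simp
  have 3: "distinct (map (signs 3) (forms 3))" by code_simp
  have 4: "distinct (map (signs 4) (forms 4))" by code_simp
  assume "n \<in> {1,2,3,4}" then show ?thesis using 1 2 3 4 by auto
qed

lemma C3: "n \<in> {1,2,3,4} \<Longrightarrow> set (filter (\<lambda>s. n = 4 \<longrightarrow> cond4 s) (List.n_lists (length (edges n)) [1,-1])) \<subseteq> set (map (signs n) (forms n))"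
proof -
  have 1: "set (filter (\<lambda>s. 1 = (4::nat) \<longrightarrow> cond4 s) (List.n_lists (length (edges 1)) [1,-1])) \<subseteq> set (map (signs 1) (forms 1))" by code_simp
  have 2: "set (filter (\<lambda>s. 2 = (4::nat) \<longrightarrow> cond4 s) (List.n_lists (length (edges 2)) [1,-1])) \<subseteq> set (map (signs 2) (forms 2))" by code_simp
  have 3: "set (filter (\<lambda>s. 3 = (4::nat) \<longrightarrow> cond4 s) (List.n_lists (length (edges 3)) [1,-1])) \<subseteq> set (map (signs 3) (forms 3))" by code_simp
  have 4: "set (filter (\<lambda>s. 4 = (4::nat) \<longrightarrow> cond4 s) (List.n_lists (length (edges 4)) [1,-1])) \<subseteq> set (map (signs 4) (forms 4))" by code_simp
  assume "n \<in> {1,2,3,4}" then show ?thesis using 1 2 3 4 by auto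
qed



lemma mk_map: "length bs = length ds \<Longrightarrow> map (apfst f) (mk ds bs) = mk (map f ds) bs"
  by (simp add: mk_def zip_map1 apfst_def map_prod_def split_def)

lemma forms_mem: "mk ds bs \<in> set (forms n) \<longleftrightarrow> (\<exists>ds' bs'. mk ds bs = mk ds' bs' \<and> length ds' = n \<and> set ds' \<subseteq> {0..<n} \<and> distinct ds' \<and> hd ds' = 0 \<and> length bs' = n \<and> hd bs')"
  by (auto simp: forms_def perms_def bitl_def set_n_lists)

lemma forms_elem: "G \<in> set (forms n) \<Longrightarrow> \<exists>ds bs. G = mk ds bs \<and> length ds = n \<and> set ds \<subseteq> {0..<n} \<and> length bs = n"
  by (auto simp: forms_def perms_def bitl_def set_n_lists)

lemma forms_colours: "G \<in> set (forms n) \<Longrightarrow> fst ` set G \<subseteq> {0..<n}"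
proof -
  assume "G \<in> set (forms n)"
  then obtain ds bs where "G = mk ds bs" "length ds = n" "set ds \<subseteq> {0..<n}" "length bs = n"
    using forms_elem by blast
  then show ?thesis by (auto simp: mk_def dest!: set_zip_leftD)
qed

lemma restrict_map:
  assumes "inj_on f S" "T \<subseteq> S" "fst ` set G \<subseteq> S"
  shows "restrict_neck (f ` T) (map (apfst f) G) = map (apfst f) (restrict_neck T G)"
  unfolding restrict_neck_def filter_map
proof (rule arg_cong[where f="map (apfst f)"], rule filter_cong[OF refl])
  fix b assume "b \<in> set G"
  then have "fst b \<in> S" using assms by auto
  then show "((\<lambda>b. fst b \<in> f ` T) \<circ> apfst f) b = (fst b \<in> T)"
    using inj_on_image_mem_iff[OF assms(1) \<open>fst b \<in> S\<close> assms(2)] by (simp add: apfst_def map_prod_def split_def)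
qed

lemma fs_map:
  assumes inj: "inj_on f S" and TS: "T \<subseteq> S" and fs: "framed_small T G"
  shows "framed_small (f ` T) (map (apfst f) G)"
proof -
  have col: "fst ` set G \<subseteq> T" using fs unfolding framed_small_def by blast
  have c1: "fst ` set (map (apfst f) G) \<subseteq> f ` T" using col by (force simp: apfst_def map_prod_def split_def)
  have c2: "length (filter (\<lambda>b. fst b = f t) (map (apfst f) G)) = 2" if "t \<in> T" for t
  proof -
    have "filter (\<lambda>b. fst b = f t) (map (apfst f) G) = map (apfst f) (filter (\<lambda>b. fst b = t) G)"
      unfolding filter_map
    proof (rule arg_cong[where f="map (apfst f)"], rule filter_cong[OF refl])
      fix b assume "b \<in> set G"
      then have "fst b \<in> S" using col TS by auto
      then show "((\<lambda>b. fst b = f t) \<circ> apfst f) b = (fst b = t)"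
        using inj that TS by (auto simp: apfst_def map_prod_def split_def inj_on_def)
    qed
    then show ?thesis using fs that unfolding framed_small_def by simp
  qed
  have c3: "length (filter (\<lambda>b. b = (f t, True)) (map (apfst f) G)) = 1" if "t \<in> T" for t
  proof -
    have "filter (\<lambda>b. b = (f t, True)) (map (apfst f) G) = map (apfst f) (filter (\<lambda>b. b = (t, True)) G)"
      unfolding filter_map
    proof (rule arg_cong[where f="map (apfst f)"], rule filter_cong[OF refl])
      fix b assume "b \<in> set G"
      then have "fst b \<in> S" using col TS by auto
      then show "((\<lambda>b. b = (f t, True)) \<circ> apfst f) b = (b = (t, True))"
        using inj that TS by (cases b) (auto simp: inj_on_def)
    qed
    then show ?thesis using fs that unfolding framed_small_def by simp
  qed
  have c4: "map fst (rotate (length (map (apfst f) G) div 2) (map (apfst f) G)) = map fst (map (apfst f) G)"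
  proof -
    have "map fst (rotate (length G div 2) (map (apfst f) G)) = map f (map fst (rotate (length G div 2) G))"
      by (simp add: rotate_map)
    also have "\<dots> = map f (map fst G)" using fs unfolding framed_small_def by simp
    finally show ?thesis by simp
  qed
  show ?thesis unfolding framed_small_def using c1 c2 c3 c4 by blast
qed

lemma edge_sign_esg: "edge_sign (restrict_neck {i, j} xs) i j = esg xs i j"
proof -
  have "restrict_neck {i, j} xs = filter (\<lambda>b. fst b = i \<or> fst b = j) xs"
    unfolding restrict_neck_def by (rule filter_cong) auto
  then show ?thesis unfolding edge_sign_def esg_def Let_def by (auto simp: atLeast0LessThan)
qed

lemma esg_map:
  assumes inj: "inj_on f S" and col: "fst ` set G \<subseteq> S" and ij: "i \<in> S" "j \<in> S"
  shows "esg (map (apfst f) G) (f i) (f j) = esg G i j"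
proof -
  let ?ys = "filter (\<lambda>b. fst b = i \<or> fst b = j) G"
  have e: "filter (\<lambda>b. fst b = f i \<or> fst b = f j) (map (apfst f) G) = map (apfst f) ?ys"
    unfolding filter_map
  proof (rule arg_cong[where f="map (apfst f)"], rule filter_cong[OF refl])
    fix b assume "b \<in> set G"
    then have "fst b \<in> S" using col by auto
    then show "((\<lambda>b. fst b = f i \<or> fst b = f j) \<circ> apfst f) b = (fst b = i \<or> fst b = j)"
      using inj ij by (auto simp: apfst_def map_prod_def split_def inj_on_def)
  qed
  have sy: "fst (?ys ! p) \<in> S" if "p < length ?ys" for p
  proof -
    have "?ys ! p \<in> set ?ys" by (rule nth_mem[OF that])
    then have "?ys ! p \<in> set G" by (rule subsetD[OF filter_is_subset])
    then show ?thesis using col by auto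
  qed
  have key: "(apfst f (?ys ! p) = (f k, True)) = (?ys ! p = (k, True))" if "p < length ?ys" "k \<in> S" for p k
  proof -
    obtain c b where cb: "?ys ! p = (c, b)" by (cases "?ys ! p")
    have "c \<in> S" using sy[OF that(1)] cb by simp
    then have "f c = f k \<longleftrightarrow> c = k" using inj that(2) by (meson inj_onD)
    then show ?thesis using cb by simp
  qed
  have eqv: "(\<exists>p\<in>set [0..<length ?ys]. map (apfst f) ?ys ! p = (f i, True) \<and> map (apfst f) ?ys ! (Suc p mod length ?ys) = (f j, True))
      = (\<exists>p\<in>set [0..<length ?ys]. ?ys ! p = (i, True) \<and> ?ys ! (Suc p mod length ?ys) = (j, True))"
  proof -
    have "map (apfst f) ?ys ! p = (f i, True) \<and> map (apfst f) ?ys ! (Suc p mod length ?ys) = (f j, True)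
       \<longleftrightarrow> ?ys ! p = (i, True) \<and> ?ys ! (Suc p mod length ?ys) = (j, True)" if "p < length ?ys" for p
    proof -
      have "length ?ys > 0" using that by linarith
      then have sm: "Suc p mod length ?ys < length ?ys" by (rule mod_less_divisor)
      have m1: "map (apfst f) ?ys ! p = apfst f (?ys ! p)" using that by (rule nth_map)
      have m2: "map (apfst f) ?ys ! (Suc p mod length ?ys) = apfst f (?ys ! (Suc p mod length ?ys))"
        using sm by (rule nth_map)
      show ?thesis unfolding m1 m2 key[OF that ij(1)] key[OF sm ij(2)] by (rule refl)
    qed
    then show ?thesis by (intro bex_cong refl) simp
  qed
  show ?thesis unfolding esg_def Let_def e length_map using eqv by (simp only:)
qed



definition relab :: "'v::linorder set \<Rightarrow> nat \<Rightarrow> 'v" where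
  "relab \<sigma> i = sorted_list_of_set \<sigma> ! i"

definition good :: "('v set \<Rightarrow> int) \<Rightarrow> 'v::linorder set \<Rightarrow> 'v fnecklace \<Rightarrow> bool" where
  "good a \<sigma> xs \<longleftrightarrow> (\<forall>i j. i \<in> \<sigma> \<longrightarrow> j \<in> \<sigma> \<longrightarrow> i < j \<longrightarrow> edge_sign (restrict_neck {i, j} xs) i j = a {i, j})"

lemma relab_inj: "finite \<sigma> \<Longrightarrow> inj_on (relab \<sigma>) {0..<card \<sigma>}"
  unfolding relab_def inj_on_def
  by (simp add: nth_eq_iff_index_eq)

lemma relab_image: "finite \<sigma> \<Longrightarrow> relab \<sigma> ` {0..<card \<sigma>} = \<sigma>"
proof -
  assume fin: "finite \<sigma>"
  have "relab \<sigma> ` {0..<card \<sigma>} = set (sorted_list_of_set \<sigma>)"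
    unfolding relab_def by (force simp: in_set_conv_nth image_def)
  then show ?thesis using fin by simp
qed

lemma relab_mono: "finite \<sigma> \<Longrightarrow> p < q \<Longrightarrow> q < card \<sigma> \<Longrightarrow> relab \<sigma> p < relab \<sigma> q"
  unfolding relab_def
  using sorted_wrt_nth_less[OF strict_sorted_list_of_set[of \<sigma>]] by simp

lemma relab_edge:
  assumes fin: "finite \<sigma>" and ij: "i \<in> \<sigma>" "j \<in> \<sigma>" "i < j"
  shows "\<exists>p q. p < q \<and> q < card \<sigma> \<and> i = relab \<sigma> p \<and> j = relab \<sigma> q"
proof -
  obtain p where p: "p < card \<sigma>" "i = relab \<sigma> p" using relab_image[OF fin] ij(1) by force
  obtain q where q: "q < card \<sigma>" "j = relab \<sigma> q" using relab_image[OF fin] ij(2) by force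
  have "p < q"
  proof (rule ccontr)
    assume "\<not> p < q"
    then have "q = p \<or> q < p" by auto
    then show False using relab_mono[OF fin, of q p] p q ij(3) by auto
  qed
  then show ?thesis using p q by blast
qed

lemma relabel:
  fixes \<sigma> :: "'v::linorder set"
  assumes fs: "framed_small \<sigma> xs" and fin: "finite \<sigma>" and ne: "\<sigma> \<noteq> {}"
  shows "\<exists>k G. G \<in> set (forms (card \<sigma>)) \<and> rotate k xs = map (apfst (relab \<sigma>)) G"
proof -
  define n where "n = card \<sigma>"
  define vs where "vs = sorted_list_of_set \<sigma>"
  have n0: "n > 0" unfolding n_def using fin ne by (simp add: card_gt_0_iff)
  have lvs: "length vs = n" "set vs = \<sigma>" "distinct vs" using fin unfolding vs_def n_def by auto
  have "vs ! 0 \<in> set vs" using lvs(1) n0 by simp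
  then have v0: "vs ! 0 \<in> \<sigma>" using lvs(2) by simp
  obtain k cs bs where st: "rotate k xs = mk cs bs" "distinct cs" "set cs = \<sigma>" "length bs = length cs"
     "cs \<noteq> []" "hd cs = vs ! 0" "hd bs"
    using structure_lemma[OF fs fin v0] by blast
  have lcs: "length cs = n" using distinct_card[OF st(2)] st(3) n_def by simp
  have exi: "\<exists>i. i < n \<and> vs ! i = c" if "c \<in> set cs" for c
  proof -
    have "c \<in> set vs" using that st(3) lvs(2) by simp
    then obtain i where "i < length vs" "vs ! i = c" by (auto simp: in_set_conv_nth)
    then show ?thesis using lvs(1) by blast
  qed
  define ds where "ds = map (\<lambda>c. SOME i. i < n \<and> vs ! i = c) cs"
  have dsp: "ds ! t < n \<and> vs ! (ds ! t) = cs ! t" if "t < length cs" for t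
  proof -
    have "cs ! t \<in> set cs" using that by simp
    from someI_ex[OF exi[OF this]] show ?thesis unfolding ds_def using that by simp
  qed
  have lds: "length ds = n" unfolding ds_def using lcs by simp
  have mapds: "map (relab \<sigma>) ds = cs"
    by (rule nth_equalityI) (simp_all add: lds lcs dsp relab_def vs_def[symmetric] ds_def[symmetric])
  have "distinct (map (relab \<sigma>) ds)" using mapds st(2) by simp
  then have dds: "distinct ds" by (simp add: distinct_map)
  have sds: "set ds \<subseteq> {0..<n}" using dsp lds lcs by (auto simp: in_set_conv_nth)
  have hds: "hd ds = 0"
  proof -
    have "ds \<noteq> []" using lds n0 by auto
    then have h: "hd ds = ds ! 0" "hd cs = cs ! 0" using st(5) by (simp_all add: hd_conv_nth)
    have "vs ! (ds ! 0) = vs ! 0" using dsp[of 0] lcs n0 h st(6) by simp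
    moreover have "ds ! 0 < n" using dsp[of 0] lcs n0 by simp
    ultimately have "ds ! 0 = 0" using lvs n0 by (simp add: nth_eq_iff_index_eq)
    then show ?thesis using h by simp
  qed
  have mem: "mk ds bs \<in> set (forms n)"
    unfolding forms_mem using lds sds dds hds st(4,7) lcs by (intro exI[of _ ds] exI[of _ bs]) simp
  have "rotate k xs = map (apfst (relab \<sigma>)) (mk ds bs)"
    using st(1) mk_map[of bs ds "relab \<sigma>"] st(4) lcs lds mapds by simp
  then show ?thesis using mem n_def by blast
qed

lemma card_cases: "finite \<sigma> \<Longrightarrow> \<sigma> \<noteq> {} \<Longrightarrow> card \<sigma> \<le> 4 \<Longrightarrow> card \<sigma> \<in> {1,2,3,4}"
proof -
  assume "finite \<sigma>" "\<sigma> \<noteq> {}" "card \<sigma> \<le> 4"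
  then have "card \<sigma> > 0" "card \<sigma> \<le> 4" using card_gt_0_iff by blast+
  then show ?thesis by simp presburger
qed

lemma edges_mem: "(p, q) \<in> set (edges n) \<longleftrightarrow> p < q \<and> q < n"
  unfolding edges_def by (auto simp: image_iff intro!: bexI[of _ p])

lemma uniq:
  fixes \<sigma> :: "'v::linorder set"
  assumes fin: "finite \<sigma>" and ne: "\<sigma> \<noteq> {}" and c4: "card \<sigma> \<le> 4"
    and fx: "framed_small \<sigma> xs" and fy: "framed_small \<sigma> ys"
    and gx: "good a \<sigma> xs" and gy: "good a \<sigma> ys"
  shows "neck_eq xs ys"
proof -
  define n where "n = card \<sigma>"
  define f where "f = relab \<sigma>"
  have nc: "n \<in> {1,2,3,4}" using card_cases[OF fin ne c4] n_def by simp
  have inj: "inj_on f {0..<n}" using relab_inj[OF fin] f_def n_def by simp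
  obtain k1 G1 where g1: "G1 \<in> set (forms n)" "rotate k1 xs = map (apfst f) G1"
    using relabel[OF fx fin ne] f_def n_def by blast
  obtain k2 G2 where g2: "G2 \<in> set (forms n)" "rotate k2 ys = map (apfst f) G2"
    using relabel[OF fy fin ne] f_def n_def by blast
  have sig: "esg G (p::nat) q = a {f p, f q}"
    if G: "G \<in> set (forms n)" and rot: "rotate k zs = map (apfst f) G" and gz: "good a \<sigma> zs"
      and pq: "(p, q) \<in> set (edges n)" for G k zs p q
  proof -
    have pq': "p < q" "q < n" using pq edges_mem by auto
    have col: "fst ` set G \<subseteq> {0..<n}" using forms_colours[OF G] .
    have "esg G p q = esg (map (apfst f) G) (f p) (f q)"
      using esg_map[OF inj col, of p q] pq' by simp
    also have "\<dots> = edge_sign (restrict_neck {f p, f q} (rotate k zs)) (f p) (f q)"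
      unfolding rot by (rule edge_sign_esg[symmetric])
    also have "\<dots> = edge_sign (restrict_neck {f p, f q} zs) (f p) (f q)"
    proof -
      have "neck_eq zs (rotate k zs)" unfolding neck_eq_def by blast
      then show ?thesis by (rule edge_sign_neck[OF neck_restrict, symmetric])
    qed
    also have "\<dots> = a {f p, f q}"
    proof -
      have "f p \<in> \<sigma>" "f q \<in> \<sigma>" using relab_image[OF fin] pq' f_def n_def by auto
      moreover have "f p < f q" using relab_mono[OF fin pq'(1)] pq' f_def n_def by simp
      ultimately show ?thesis using gz unfolding good_def by blast
    qed
    finally show ?thesis .
  qed
  have "signs n G1 = signs n G2"
    unfolding signs_def
  proof (rule map_cong[OF refl])
    fix e assume "e \<in> set (edges n)"
    obtain p q where e1: "e = (p, q)" by (cases e)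
    then have e: "e = (p, q)" "(p, q) \<in> set (edges n)" using \<open>e \<in> set (edges n)\<close> by simp_all
    show "(case e of (i, j) \<Rightarrow> esg G1 i j) = (case e of (i, j) \<Rightarrow> esg G2 i j)"
      using sig[OF g1 gx e(2)] sig[OF g2 gy e(2)] e(1) by simp
  qed
  moreover have "inj_on (signs n) (set (forms n))" using C2[OF nc] distinct_map by blast
  ultimately have "G1 = G2" using g1(1) g2(1) by (meson inj_onD)
  then have "rotate k1 xs = rotate k2 ys" using g1 g2 by simp
  moreover have "neck_eq xs (rotate k1 xs)" unfolding neck_eq_def by blast
  moreover have "neck_eq (rotate k2 ys) ys" using neck_sym unfolding neck_eq_def by blast
  ultimately show ?thesis by (metis neck_trans)
qed

lemma restrict_self: "framed_small \<sigma> xs \<Longrightarrow> restrict_neck \<sigma> xs = xs"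
  unfolding framed_small_def restrict_neck_def by (auto intro!: filter_True)

lemma restr_fs:
  fixes \<sigma> :: "'v::linorder set"
  assumes fin: "finite \<sigma>" and ne: "\<sigma> \<noteq> {}" and c4: "card \<sigma> \<le> 4"
    and fx: "framed_small \<sigma> xs" and tau: "\<tau> \<subseteq> \<sigma>" "\<tau> \<noteq> {}"
  shows "framed_small \<tau> (restrict_neck \<tau> xs)"
proof -
  define n where "n = card \<sigma>"
  define f where "f = relab \<sigma>"
  have nc: "n \<in> {1,2,3,4}" using card_cases[OF fin ne c4] n_def by simp
  have inj: "inj_on f {0..<n}" using relab_inj[OF fin] f_def n_def by simp
  have im: "f ` {0..<n} = \<sigma>" using relab_image[OF fin] f_def n_def by simp
  obtain k G where g: "G \<in> set (forms n)" "rotate k xs = map (apfst f) G"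
    using relabel[OF fx fin ne] f_def n_def by blast
  define T where "T = {i. i < n \<and> f i \<in> \<tau>}"
  have TS: "T \<subseteq> {0..<n}" unfolding T_def by auto
  have fT: "f ` T = \<tau>" unfolding T_def using im tau by auto
  have Tne: "T \<noteq> {}" using fT tau by auto
  obtain Tl where Tl: "Tl \<in> set (subseqs [0..<n])" "set Tl = T"
    using subset_subseqs[of T "[0..<n]"] TS by auto
  have "Tl \<noteq> []" using Tl Tne by auto
  then have "framed_small (set Tl) (restrict_neck (set Tl) G)" using C1[OF nc] g(1) Tl(1) by blast
  then have fsT: "framed_small T (restrict_neck T G)" using Tl(2) by simp
  have col: "fst ` set G \<subseteq> {0..<n}" using forms_colours[OF g(1)] .
  have "framed_small \<tau> (map (apfst f) (restrict_neck T G))"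
    using fs_map[OF inj TS fsT] fT by simp
  also have "map (apfst f) (restrict_neck T G) = restrict_neck \<tau> (rotate k xs)"
    using restrict_map[OF inj TS col] fT g(2) by simp
  finally have "framed_small \<tau> (restrict_neck \<tau> (rotate k xs))" .
  moreover have "neck_eq (restrict_neck \<tau> (rotate k xs)) (restrict_neck \<tau> xs)"
    by (rule neck_restrict, rule neck_sym) (auto simp: neck_eq_def)
  ultimately show ?thesis using framed_small_neck by blast
qed

lemma good_restrict: "good a \<sigma> xs \<Longrightarrow> \<tau> \<subseteq> \<sigma> \<Longrightarrow> good a \<tau> (restrict_neck \<tau> xs)"
proof -
  assume g: "good a \<sigma> xs" and ts: "\<tau> \<subseteq> \<sigma>"
  have rr: "restrict_neck {i, j} (restrict_neck \<tau> xs) = restrict_neck {i, j} xs" if "i \<in> \<tau>" "j \<in> \<tau>" for i j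
    unfolding restrict_neck_def using that by (auto intro: filter_cong)
  show ?thesis unfolding good_def
  proof (intro allI impI)
    fix i j assume ij: "i \<in> \<tau>" "j \<in> \<tau>" "i < j"
    then have "i \<in> \<sigma>" "j \<in> \<sigma>" using ts by auto
    then have "edge_sign (restrict_neck {i, j} xs) i j = a {i, j}" using g ij(3) unfolding good_def by blast
    then show "edge_sign (restrict_neck {i, j} (restrict_neck \<tau> xs)) i j = a {i, j}"
      using rr[OF ij(1,2)] by simp
  qed
qed



lemma coll_insert: "{u \<in> insert x A. P u} = (if P x then insert x {u \<in> A. P u} else {u \<in> A. P u})"
  by auto

lemma cobdry3:
  fixes v0 v1 v2 :: "'v::linorder"
  assumes o: "v0 < v1" "v1 < v2"
  shows "cobdry c {v0, v1, v2} = c {v1, v2} - c {v0, v2} + c {v0, v1}"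
proof -
  let ?s = "{v0, v1, v2}"
  have d: "v0 \<noteq> v1" "v0 \<noteq> v2" "v1 \<noteq> v2" using o by auto
  have sm: "(\<Sum>v\<in>?s. h v) = h v0 + h v1 + h v2" for h :: "'v \<Rightarrow> 'b::comm_monoid_add"
    using d by (simp add: add.assoc)
  have k: "{u \<in> ?s. u < v0} = {}" "{u \<in> ?s. u < v1} = {v0}" "{u \<in> ?s. u < v2} = {v0, v1}"
    using o by auto
  have m: "?s - {v0} = {v1, v2}" "?s - {v1} = {v0, v2}" "?s - {v2} = {v0, v1}" using d by auto
  show ?thesis unfolding cobdry_def sm k m using d by simp
qed

lemma cobdry4:
  fixes v0 v1 v2 v3 :: "'v::linorder"
  assumes o: "v0 < v1" "v1 < v2" "v2 < v3"
  shows "cobdry c {v0, v1, v2, v3} = c {v1, v2, v3} - c {v0, v2, v3} + c {v0, v1, v3} - c {v0, v1, v2}"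
proof -
  let ?s = "{v0, v1, v2, v3}"
  have d: "v0 \<noteq> v1" "v0 \<noteq> v2" "v1 \<noteq> v2" "v0 \<noteq> v3" "v1 \<noteq> v3" "v2 \<noteq> v3" using o by auto
  have sm: "(\<Sum>v\<in>?s. h v) = h v0 + h v1 + h v2 + h v3" for h :: "'v \<Rightarrow> 'b::comm_monoid_add"
    using d by (simp add: add.assoc)
  have k: "{u \<in> ?s. u < v0} = {}" "{u \<in> ?s. u < v1} = {v0}" "{u \<in> ?s. u < v2} = {v0, v1}"
     "{u \<in> ?s. u < v3} = {v0, v1, v2}"
    using o by auto
  have m: "?s - {v0} = {v1, v2, v3}" "?s - {v1} = {v0, v2, v3}" "?s - {v2} = {v0, v1, v3}" "?s - {v3} = {v0, v1, v2}"
    using d by auto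
  show ?thesis unfolding cobdry_def sm k m using d by simp
qed

lemma edges4: "edges 4 = [(0,1),(0,2),(0,3),(1,2),(1,3),(2,3)]" by code_simp

lemma list4: "length xs = 4 \<Longrightarrow> \<exists>a b c d. xs = [a, b, c, d]"
  by (auto simp: numeral_eq_Suc length_Suc_conv)

lemma cond4_link:
  fixes \<sigma> :: "'v::linorder set"
  assumes fin: "finite \<sigma>" and c4: "card \<sigma> = 4" and cb: "cobdry (\<lambda>\<tau>. F (cobdry a \<tau>)) \<sigma> = 0"
  shows "cond4 (map (\<lambda>(p, q). a {relab \<sigma> p, relab \<sigma> q}) (edges 4))"
proof -
  define vs where "vs = sorted_list_of_set \<sigma>"
  have "length vs = 4" using c4 fin unfolding vs_def by simp
  then obtain v0 v1 v2 v3 where vs: "vs = [v0, v1, v2, v3]" using list4 by blast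
  have "sorted_wrt (<) vs" unfolding vs_def by (rule strict_sorted_list_of_set)
  then have o: "v0 < v1" "v1 < v2" "v2 < v3" using vs by auto
  have s: "\<sigma> = {v0, v1, v2, v3}" using fin vs unfolding vs_def by (metis set_sorted_list_of_set list.set(1) list.set(2))
  have r: "relab \<sigma> 0 = v0" "relab \<sigma> 1 = v1" "relab \<sigma> 2 = v2" "relab \<sigma> 3 = v3"
    unfolding relab_def vs_def[symmetric] vs by simp_all
  have o2: "v0 < v2" "v0 < v3" "v1 < v3" using o by auto
  have "cobdry (\<lambda>\<tau>. F (cobdry a \<tau>)) \<sigma> =
     F (a {v2, v3} - a {v1, v3} + a {v1, v2}) - F (a {v2, v3} - a {v0, v3} + a {v0, v2})
   + F (a {v1, v3} - a {v0, v3} + a {v0, v1}) - F (a {v1, v2} - a {v0, v2} + a {v0, v1})"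
    unfolding s cobdry4[OF o] cobdry3[OF o(2,3)] cobdry3[OF o2(1) o(3)] cobdry3[OF o(1) o2(3)] cobdry3[OF o(1,2)]
    by simp
  moreover have "relab \<sigma> (Suc 0) = v1" using r(2) by simp
  ultimately show ?thesis using cb unfolding cond4_def edges4 by (simp add: r)
qed



definition Ncol :: "('v set \<Rightarrow> int) \<Rightarrow> 'v::linorder set \<Rightarrow> 'v fnecklace" where
  "Ncol a \<sigma> = map (apfst (relab \<sigma>)) (SOME G. G \<in> set (forms (card \<sigma>)) \<and>
      signs (card \<sigma>) G = map (\<lambda>(p, q). a {relab \<sigma> p, relab \<sigma> q}) (edges (card \<sigma>)))"

lemma Ncol_props:
  fixes \<sigma> :: "'v::linorder set"
  assumes fin: "finite \<sigma>" and ne: "\<sigma> \<noteq> {}" and c4: "card \<sigma> \<le> 4"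
    and pm: "\<forall>e. e \<subseteq> \<sigma> \<longrightarrow> card e = 2 \<longrightarrow> a e = 1 \<or> a e = -1"
    and cd: "card \<sigma> = 4 \<longrightarrow> cond4 (map (\<lambda>(p, q). a {relab \<sigma> p, relab \<sigma> q}) (edges 4))"
  shows "framed_small \<sigma> (Ncol a \<sigma>) \<and> good a \<sigma> (Ncol a \<sigma>)"
proof -
  define n where "n = card \<sigma>"
  define f where "f = relab \<sigma>"
  define s where "s = map (\<lambda>(p, q). a {f p, f q}) (edges n)"
  have nc: "n \<in> {1,2,3,4}" using card_cases[OF fin ne c4] n_def by simp
  have inj: "inj_on f {0..<n}" using relab_inj[OF fin] f_def n_def by simp
  have im: "f ` {0..<n} = \<sigma>" using relab_image[OF fin] f_def n_def by simp
  have ss: "set s \<subseteq> {1, -1}"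
  proof
    fix x assume "x \<in> set s"
    then obtain p q where pq: "(p, q) \<in> set (edges n)" "x = a {f p, f q}" unfolding s_def by auto
    then have pq': "p < q" "q < n" using edges_mem by auto
    have "f p \<in> \<sigma>" "f q \<in> \<sigma>" using im pq' by auto
    moreover have "f p \<noteq> f q" using relab_mono[OF fin pq'(1)] pq' f_def n_def by simp
    ultimately have "{f p, f q} \<subseteq> \<sigma>" "card {f p, f q} = 2" by auto
    then show "x \<in> {1, -1}" using pm pq(2) by auto
  qed
  have "s \<in> set (List.n_lists (length (edges n)) [1, -1])"
    using ss unfolding set_n_lists s_def by auto
  moreover have "n = 4 \<longrightarrow> cond4 s" using cd unfolding s_def n_def f_def by simp
  ultimately have "s \<in> set (map (signs n) (forms n))" using C3[OF nc] by auto
  then have ex: "\<exists>G. G \<in> set (forms n) \<and> signs n G = s" by auto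
  define G0 where "G0 = (SOME G. G \<in> set (forms n) \<and> signs n G = s)"
  have G0: "G0 \<in> set (forms n)" "signs n G0 = s" using someI_ex[OF ex] unfolding G0_def by blast+
  have NG: "Ncol a \<sigma> = map (apfst f) G0" unfolding Ncol_def G0_def s_def f_def n_def by simp
  have col: "fst ` set G0 \<subseteq> {0..<n}" using forms_colours[OF G0(1)] .
  have n0: "n > 0" using nc by auto
  have "[0..<n] \<in> set (subseqs [0..<n])" by (rule subseqs_refl)
  moreover have "[0..<n] \<noteq> []" using n0 by simp
  ultimately have "framed_small (set [0..<n]) (restrict_neck (set [0..<n]) G0)" using C1[OF nc] G0(1) by blast
  moreover have "restrict_neck {0..<n} G0 = G0" unfolding restrict_neck_def using col by (auto intro!: filter_True)
  ultimately have fs0: "framed_small {0..<n} G0" by simp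
  have fs: "framed_small \<sigma> (Ncol a \<sigma>)" using fs_map[OF inj subset_refl fs0] im NG by simp
  have gd: "good a \<sigma> (Ncol a \<sigma>)" unfolding good_def
  proof (intro allI impI)
    fix i j assume ij: "i \<in> \<sigma>" "j \<in> \<sigma>" "i < j"
    obtain p q where pq: "p < q" "q < n" "i = f p" "j = f q"
      using relab_edge[OF fin ij] f_def n_def by blast
    have e: "(p, q) \<in> set (edges n)" using pq edges_mem by auto
    have "edge_sign (restrict_neck {i, j} (Ncol a \<sigma>)) i j = esg (map (apfst f) G0) (f p) (f q)"
      using NG pq edge_sign_esg by simp
    also have "\<dots> = esg G0 p q" using esg_map[OF inj col] pq by simp
    also have "\<dots> = a {f p, f q}"
    proof -
      have "map (\<lambda>(i, j). esg G0 i j) (edges n) = map (\<lambda>(p, q). a {f p, f q}) (edges n)"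
        using G0(2) unfolding s_def signs_def .
      then show ?thesis using e by (auto simp: map_eq_conv)
    qed
    finally show "edge_sign (restrict_neck {i, j} (Ncol a \<sigma>)) i j = a {i, j}" using pq by simp
  qed
  show ?thesis using fs gd by blast
qed



lemma sc_fin: "simplicial_complex B \<Longrightarrow> \<sigma> \<in> B \<Longrightarrow> finite \<sigma> \<and> \<sigma> \<noteq> {}"
  unfolding simplicial_complex_def by blast

lemma sc_face: "simplicial_complex B \<Longrightarrow> \<sigma> \<in> B \<Longrightarrow> \<tau> \<noteq> {} \<Longrightarrow> \<tau> \<subseteq> \<sigma> \<Longrightarrow> \<tau> \<in> B"
  unfolding simplicial_complex_def by blast

lemma skel_face:
  assumes sc: "simplicial_complex B" and s: "\<sigma> \<in> skeleton B k" and t: "\<tau> \<noteq> {}" "\<tau> \<subseteq> \<sigma>"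
  shows "\<tau> \<in> skeleton B k"
proof -
  have sB: "\<sigma> \<in> B" "card \<sigma> \<le> k + 1" using s unfolding skeleton_def by auto
  have fin: "finite \<sigma>" using sc_fin[OF sc sB(1)] by blast
  have "\<tau> \<in> B" using sc_face[OF sc sB(1) t] .
  moreover have "card \<tau> \<le> card \<sigma>" using card_mono[OF fin t(2)] .
  ultimately show ?thesis using sB(2) unfolding skeleton_def by simp
qed

lemma good_from_cons:
  fixes B :: "'v::linorder set set"
  assumes sc: "simplicial_complex B" and cons: "consistent_fs B k N" and k: "1 \<le> k"
    and s: "\<sigma> \<in> skeleton B k"
    and es: "\<forall>i j. {i, j} \<in> B \<longrightarrow> i < j \<longrightarrow> edge_sign (N {i, j}) i j = a {i, j}"
  shows "good a \<sigma> (N \<sigma>)"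
  unfolding good_def
proof (intro allI impI)
  fix i j assume ij: "i \<in> \<sigma>" "j \<in> \<sigma>" "i < j"
  have e: "{i, j} \<noteq> {}" "{i, j} \<subseteq> \<sigma>" using ij by auto
  have cc: "\<forall>\<sigma>\<in>skeleton B k. \<forall>\<tau>. \<tau> \<noteq> {} \<longrightarrow> \<tau> \<subseteq> \<sigma> \<longrightarrow> neck_eq (restrict_neck \<tau> (N \<sigma>)) (N \<tau>)"
    using cons unfolding consistent_fs_def by (rule conjunct2)
  have "neck_eq (restrict_neck {i, j} (N \<sigma>)) (N {i, j})" using cc[rule_format, OF s e(1) e(2)] .
  then have "edge_sign (restrict_neck {i, j} (N \<sigma>)) i j = edge_sign (N {i, j}) i j" by (rule edge_sign_neck)
  moreover have "{i, j} \<in> B" using skel_face[OF sc s e] unfolding skeleton_def by blast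
  ultimately show "edge_sign (restrict_neck {i, j} (N \<sigma>)) i j = a {i, j}" using es ij(3) by simp
qed

theorem mainTheorem11:
  fixes B :: "'v::linorder set set" and a :: "'v set \<Rightarrow> int"
  assumes "finite B" and "simplicial_complex B"
    and "\<forall>e\<in>B. card e = 2 \<longrightarrow> a e = 1 \<or> a e = -1"
    and "\<forall>\<sigma>\<in>B. card \<sigma> = 4 \<longrightarrow> cobdry (\<lambda>\<tau>. F (cobdry a \<tau>)) \<sigma> = 0"
  shows "(\<exists>N2. determined_by B a N2) \<and>
         (\<forall>N2. determined_by B a N2 \<longrightarrow>
            (\<exists>N3. extends_to_3 B N2 N3) \<and>
            (\<forall>N3 N3'. extends_to_3 B N2 N3 \<longrightarrow> extends_to_3 B N2 N3' \<longrightarrow>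
               (\<forall>\<sigma>\<in>skeleton B 3. neck_eq (N3 \<sigma>) (N3' \<sigma>))))"
proof -
  note sc = assms(2)
  have finB: "finite \<sigma>" "\<sigma> \<noteq> {}" if "\<sigma> \<in> B" for \<sigma> using sc_fin[OF sc that] by blast+
  have skB: "\<sigma> \<in> B" "card \<sigma> \<le> k + 1" if "\<sigma> \<in> skeleton B k" for \<sigma> k
    using that unfolding skeleton_def by auto
  have NB: "framed_small \<sigma> (Ncol a \<sigma>) \<and> good a \<sigma> (Ncol a \<sigma>)" if s: "\<sigma> \<in> B" "card \<sigma> \<le> 4" for \<sigma>
  proof (rule Ncol_props[OF finB[OF s(1)] s(2)])
    show "\<forall>e. e \<subseteq> \<sigma> \<longrightarrow> card e = 2 \<longrightarrow> a e = 1 \<or> a e = -1"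
    proof (intro allI impI)
      fix e assume e: "e \<subseteq> \<sigma>" "card e = 2"
      then have "e \<noteq> {}" by auto
      then have "e \<in> B" using sc_face[OF sc s(1) _ e(1)] by blast
      then show "a e = 1 \<or> a e = -1" using assms(3) e(2) by blast
    qed
    show "card \<sigma> = 4 \<longrightarrow> cond4 (map (\<lambda>(p, q). a {relab \<sigma> p, relab \<sigma> q}) (edges 4))"
      using cond4_link[OF finB(1)[OF s(1)]] assms(4) s(1) by blast
  qed
  have U: "neck_eq xs ys" if s: "\<sigma> \<in> B" "card \<sigma> \<le> 4" and f: "framed_small \<sigma> xs" "framed_small \<sigma> ys"
    and g: "good a \<sigma> xs" "good a \<sigma> ys" for \<sigma> xs ys
    using uniq[OF finB[OF s(1)] s(2) f g] .
  have RF: "framed_small \<tau> (restrict_neck \<tau> xs)" if s: "\<sigma> \<in> B" "card \<sigma> \<le> 4" and f: "framed_small \<sigma> xs"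
    and t: "\<tau> \<subseteq> \<sigma>" "\<tau> \<noteq> {}" for \<sigma> \<tau> xs
    using restr_fs[OF finB[OF s(1)] s(2) f t] .
  have CONS: "consistent_fs B k N"
    if k: "k \<le> 3" and P: "\<And>\<sigma>. \<sigma> \<in> skeleton B k \<Longrightarrow> framed_small \<sigma> (N \<sigma>) \<and> good a \<sigma> (N \<sigma>)" for k N
    unfolding consistent_fs_def
  proof (intro conjI ballI allI impI)
    fix \<sigma> assume s: "\<sigma> \<in> skeleton B k"
    then show "framed_small \<sigma> (N \<sigma>)" using P by blast
  next
    fix \<sigma> \<tau> assume s: "\<sigma> \<in> skeleton B k" and t: "\<tau> \<noteq> {}" "\<tau> \<subseteq> \<sigma>"
    have t2: "\<tau> \<in> skeleton B k" using skel_face[OF sc s t] .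
    have c: "card \<sigma> \<le> 4" "card \<tau> \<le> 4" using skB[OF s] skB[OF t2] k by auto
    show "neck_eq (restrict_neck \<tau> (N \<sigma>)) (N \<tau>)"
    proof (rule U[OF skB(1)[OF t2] c(2)])
      show "framed_small \<tau> (restrict_neck \<tau> (N \<sigma>))" using RF[OF skB(1)[OF s] c(1) _ t(2) t(1)] P[OF s] by blast
      show "framed_small \<tau> (N \<tau>)" using P[OF t2] by blast
      show "good a \<tau> (restrict_neck \<tau> (N \<sigma>))" using good_restrict[OF _ t(2)] P[OF s] by blast
      show "good a \<tau> (N \<tau>)" using P[OF t2] by blast
    qed
  qed
  have part1: "determined_by B a (Ncol a)"
    unfolding determined_by_def
  proof (intro conjI allI impI)
    show "consistent_fs B 2 (Ncol a)"
    proof (rule CONS)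
      fix \<sigma> :: "'v set" assume s: "\<sigma> \<in> skeleton B 2"
      have "card \<sigma> \<le> 4" using skB(2)[OF s] by simp
      then show "framed_small \<sigma> (Ncol a \<sigma>) \<and> good a \<sigma> (Ncol a \<sigma>)" using NB[OF skB(1)[OF s]] by blast
    qed simp
  next
    fix i j assume ij: "{i, j} \<in> B" "i < j"
    have c: "card {i, j} \<le> 4" using ij(2) by auto
    have g: "good a {i, j} (Ncol a {i, j})" and f: "framed_small {i, j} (Ncol a {i, j})" using NB[OF ij(1) c] by blast+
    have r: "restrict_neck {i, j} (Ncol a {i, j}) = Ncol a {i, j}" using f by (rule restrict_self)
    have "edge_sign (restrict_neck {i, j} (Ncol a {i, j})) i j = a {i, j}" using g ij(2) unfolding good_def by simp
    then show "edge_sign (Ncol a {i, j}) i j = a {i, j}" using r by simp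
  qed
  have part2: "(\<exists>N3. extends_to_3 B N2 N3) \<and>
            (\<forall>N3 N3'. extends_to_3 B N2 N3 \<longrightarrow> extends_to_3 B N2 N3' \<longrightarrow>
               (\<forall>\<sigma>\<in>skeleton B 3. neck_eq (N3 \<sigma>) (N3' \<sigma>)))" if d: "determined_by B a N2" for N2
  proof -
    have c2: "consistent_fs B 2 N2" and es: "\<forall>i j. {i, j} \<in> B \<longrightarrow> i < j \<longrightarrow> edge_sign (N2 {i, j}) i j = a {i, j}"
      using d unfolding determined_by_def by blast+
    have P2: "framed_small \<sigma> (N2 \<sigma>) \<and> good a \<sigma> (N2 \<sigma>)" if s: "\<sigma> \<in> skeleton B 2" for \<sigma>
      using c2 s good_from_cons[OF sc c2 _ s es] unfolding consistent_fs_def by simp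
    define N3 where "N3 = (\<lambda>\<sigma>. if card \<sigma> \<le> 3 then N2 \<sigma> else Ncol a \<sigma>)"
    have P3: "framed_small \<sigma> (N3 \<sigma>) \<and> good a \<sigma> (N3 \<sigma>)" if s: "\<sigma> \<in> skeleton B 3" for \<sigma>
    proof (cases "card \<sigma> \<le> 3")
      case True
      then have "\<sigma> \<in> skeleton B 2" using skB[OF s] unfolding skeleton_def by simp
      then show ?thesis using P2 True unfolding N3_def by simp
    next
      case False
      have "card \<sigma> \<le> 4" using skB(2)[OF s] by simp
      then have "framed_small \<sigma> (Ncol a \<sigma>) \<and> good a \<sigma> (Ncol a \<sigma>)" using NB[OF skB(1)[OF s]] by blast
      moreover have "N3 \<sigma> = Ncol a \<sigma>" using False unfolding N3_def by simp
      ultimately show ?thesis by simp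
    qed
    have ext: "extends_to_3 B N2 N3"
      unfolding extends_to_3_def
    proof (intro conjI ballI)
      show "consistent_fs B 3 N3" by (rule CONS) (simp_all add: P3)
    next
      fix \<sigma> assume "\<sigma> \<in> skeleton B 2"
      then have "card \<sigma> \<le> 2 + 1" by (rule skB(2))
      then have "card \<sigma> \<le> 3" by simp
      then show "neck_eq (N3 \<sigma>) (N2 \<sigma>)" unfolding N3_def by (simp add: neck_refl)
    qed
    have un: "neck_eq (M \<sigma>) (M' \<sigma>)" if e: "extends_to_3 B N2 M" "extends_to_3 B N2 M'" and s: "\<sigma> \<in> skeleton B 3"
      for M M' \<sigma>
    proof -
      have gm: "good a \<sigma> (K \<sigma>) \<and> framed_small \<sigma> (K \<sigma>)" if ek: "extends_to_3 B N2 K" for K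
      proof -
        have ck: "consistent_fs B 3 K" using ek unfolding extends_to_3_def by blast
        have esk: "\<forall>i j. {i, j} \<in> B \<longrightarrow> i < j \<longrightarrow> edge_sign (K {i, j}) i j = a {i, j}"
        proof (intro allI impI)
          fix i j assume ij: "{i, j} \<in> B" "i < j"
          have "card {i, j} \<le> 2 + 1" by (simp add: card_insert_if)
          then have "{i, j} \<in> skeleton B 2" using ij unfolding skeleton_def by simp
          then have "neck_eq (K {i, j}) (N2 {i, j})" using ek unfolding extends_to_3_def by blast
          then have "edge_sign (K {i, j}) i j = edge_sign (N2 {i, j}) i j" by (rule edge_sign_neck)
          then show "edge_sign (K {i, j}) i j = a {i, j}" using es ij by simp
        qed
        show ?thesis using good_from_cons[OF sc ck _ s esk] ck s unfolding consistent_fs_def by simp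
      qed
      have c: "card \<sigma> \<le> 4" using skB[OF s] by simp
      show ?thesis using U[OF skB(1)[OF s] c] gm[OF e(1)] gm[OF e(2)] by blast
    qed
    show ?thesis using ext un by blast
  qed
  show ?thesis using part1 part2 by blast
qed


end
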